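(* Let $\epsilon>0$ be a constant. Let $k$ and $U$ be arbitrary parameters with $U\ge k^{1+\epsilon}$, let $p>U$ be a prime and $m\le U$ a positive integer, and let $h(x)=((\sigma x+\tau)\bmod p)\bmod m$ with $\sigma,\tau\in[p]$ chosen independently and uniformly at random. Then there exist a set $X\subseteq[U]$ of $k$ keys, a key $x\notin X$ and buckets $a,b\in[m]$ such that, for $y,z\in X$ chosen independently and uniformly at random, $$\Pr\big(h(y)=h(z)=b\;\big|\;h(x)=a\big)\ge\frac{1}{mk}\exp\!\left(\Omega\!\left(\sqrt{\min\left(\tfrac{\log k}{\log\log k},\tfrac{\log U}{\log^2\log U}\right)}\right)\right).$$
   Context: $[N]=\{0,1,\dots,N-1\}$. The probability is over $\sigma,\tau,y,z$. The constant in $\Omega(\cdot)$ may depend on $\epsilon$. *)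

theory Defs
  imports "HOL-Computational_Algebra.Primes" Complex_Main
begin

definition hash :: "nat \<Rightarrow> nat \<Rightarrow> nat \<Rightarrow> nat \<Rightarrow> nat \<Rightarrow> nat" where
  "hash p m \<sigma> \<tau> x = ((\<sigma> * x + \<tau>) mod p) mod m"

text \<open>Conditional probability Pr(h(y) = h(z) = b | h(x) = a), where sigma, tau are
  uniform in [p] and y, z uniform in X, all independent. Since the distribution is uniform
  on the finite product space [p] x [p] x X x X, the probability is a ratio of counts.\<close>
definition cond_prob :: "nat \<Rightarrow> nat \<Rightarrow> nat set \<Rightarrow> nat \<Rightarrow> nat \<Rightarrow> nat \<Rightarrow> real" where
  "cond_prob p m X x a b =
     real (card {(\<sigma>, \<tau>, y, z). \<sigma> < p \<and> \<tau> < p \<and> y \<in> X \<and> z \<in> X \<and>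
                 hash p m \<sigma> \<tau> x = a \<and> hash p m \<sigma> \<tau> y = b \<and> hash p m \<sigma> \<tau> z = b})
   / real (card {(\<sigma>, \<tau>, y, z). \<sigma> < p \<and> \<tau> < p \<and> y \<in> X \<and> z \<in> X \<and>
                 hash p m \<sigma> \<tau> x = a})"

end

theory Submission
  imports Defs "HOL-Number_Theory.Cong"
begin


lemma mult_Suc_le:
  fixes p n K :: nat
  assumes "prime p" "Suc n < p ^ Suc K"
  shows "multiplicity p (Suc n) \<le> K"
proof -
  have "p ^ multiplicity p (Suc n) dvd Suc n" by (rule multiplicity_dvd)
  hence "p ^ multiplicity p (Suc n) \<le> Suc n" by (rule dvd_imp_le) simp
  hence "p ^ multiplicity p (Suc n) < p ^ Suc K" using assms by linarith
  hence "multiplicity p (Suc n) < Suc K"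
    using assms(1) power_less_imp_less_exp prime_gt_1_nat by blast
  thus ?thesis by simp
qed

lemma legendre:
  fixes p K n :: nat
  assumes "prime p" "n < p ^ Suc K"
  shows "multiplicity p (fact n :: nat) = (\<Sum>i\<in>{1..K}. n div p ^ i)"
  using assms(2)
proof (induction n)
  case 0
  then show ?case using assms(1) by simp
next
  case (Suc n)
  have p1: "p > 1" using assms(1) prime_gt_1_nat by blast
  have "multiplicity p (fact (Suc n) :: nat) = multiplicity p (Suc n * fact n)"
    by simp
  also have "\<dots> = multiplicity p (Suc n) + multiplicity p (fact n :: nat)"
    using assms(1) by (intro prime_elem_multiplicity_mult_distrib) auto
  also have "multiplicity p (fact n :: nat) = (\<Sum>i\<in>{1..K}. n div p ^ i)"
    using Suc.IH Suc.prems by (meson Suc_lessD)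
  also have "multiplicity p (Suc n) = (\<Sum>i\<in>{1..K}. if p ^ i dvd Suc n then 1 else 0)"
  proof -
    let ?v = "multiplicity p (Suc n)"
    have vK: "?v \<le> K" using mult_Suc_le[OF assms(1) Suc.prems] .
    have e: "{i\<in>{1..K}. p ^ i dvd Suc n} = {1..?v}"
    proof safe
      fix i assume "i \<in> {1..K}" "p ^ i dvd Suc n"
      thus "i \<in> {1..?v}" using power_dvd_iff_le_multiplicity[where p=p and x="Suc n" and n=i] p1 by auto
    next
      fix i assume "i \<in> {1..?v}"
      thus "i \<in> {1..K}" using vK by auto
      show "p ^ i dvd Suc n" using power_dvd_iff_le_multiplicity[where p=p and x="Suc n" and n=i] p1 \<open>i \<in> {1..?v}\<close> by auto
    qed
    have "(\<Sum>i\<in>{1..K}. if p ^ i dvd Suc n then 1 else 0) = (\<Sum>i\<in>{i\<in>{1..K}. p ^ i dvd Suc n}. 1::nat)"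
      by (rule sum.inter_filter[symmetric]) simp
    also have "\<dots> = ?v" unfolding e by simp
    finally have "(\<Sum>i\<in>{1..K}. if p ^ i dvd Suc n then 1 else 0) = ?v" .
    thus ?thesis by (rule sym)
  qed
  also have "(\<Sum>i\<in>{1..K}. if p ^ i dvd Suc n then 1 else 0) + (\<Sum>i\<in>{1..K}. n div p ^ i)
      = (\<Sum>i\<in>{1..K}. Suc n div p ^ i)"
    by (subst sum.distrib[symmetric], rule sum.cong) (auto simp: div_Suc mod_eq_0_iff_dvd)
  finally show ?case .
qed

lemma div2_bounds:
  fixes N d :: nat
  assumes "d > 0"
  shows "2 * (N div d) \<le> 2 * N div d" "2 * N div d \<le> 2 * (N div d) + 1"
proof -
  have N: "N = d * (N div d) + N mod d" by simp
  have r: "N mod d < d" using assms by simp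
  have "2 * N = d * (2 * (N div d)) + 2 * (N mod d)" using N by (metis add_mult_distrib2 mult.left_commute)
  hence "2 * N div d = 2 * (N div d) + (2 * (N mod d)) div d" using assms by simp
  moreover have "(2 * (N mod d)) div d \<le> 1" using r
    by (metis Suc_1 less_2_cases_iff less_Suc_eq_le less_mult_imp_div_less mult.commute mult_less_mono1 not_less_eq zero_less_Suc)
  ultimately show "2 * (N div d) \<le> 2 * N div d" "2 * N div d \<le> 2 * (N div d) + 1" by auto
qed

lemma mult_central:
  fixes p N :: nat
  assumes p: "prime p" and N: "N \<ge> 1"
  shows "p ^ multiplicity p (2 * N choose N) \<le> 2 * N"
proof (rule ccontr)
  define e where "e = multiplicity p (2 * N choose N)"
  assume "\<not> p ^ multiplicity p (2 * N choose N) \<le> 2 * N"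
  hence pe: "p ^ e > 2 * N" unfolding e_def by simp
  have p1: "p > 1" using p prime_gt_1_nat by blast
  define K where "K = 2 * N"
  have big: "2 * N < p ^ Suc K"
  proof -
    have "2 * N < 2 ^ (2 * N)" by (rule less_exp)
    also have "(2::nat) ^ (2 * N) \<le> 2 ^ Suc K" unfolding K_def by (intro power_increasing) auto
    finally have "2 * N < 2 ^ Suc K" .
    also have "\<dots> \<le> p ^ Suc K" using p1 by (intro power_mono) auto
    finally show ?thesis .
  qed
  have bigN: "N < p ^ Suc K" using big by simp
  have C0: "(2 * N choose N) \<noteq> 0" by simp
  have "fact N * fact (2 * N - N) * (2 * N choose N) = (fact (2 * N) :: nat)"
    by (rule binomial_fact_lemma) simp
  hence "multiplicity p (fact (2 * N) :: nat) = multiplicity p (fact N * fact N * (2 * N choose N) :: nat)"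
    by (simp add: mult_2)
  also have "\<dots> = multiplicity p (fact N :: nat) + multiplicity p (fact N :: nat) + e"
    unfolding e_def using p C0
    by (simp add: prime_elem_multiplicity_mult_distrib)
  finally have eq: "(\<Sum>i\<in>{1..K}. 2 * N div p ^ i) = 2 * (\<Sum>i\<in>{1..K}. N div p ^ i) + e"
    using legendre[OF p big] legendre[OF p bigN] by simp
  define t where "t i = 2 * N div p ^ i - 2 * (N div p ^ i)" for i
  have tle: "t i \<le> 1" for i using div2_bounds[of "p ^ i" N] p1 unfolding t_def by simp
  have tsum: "(\<Sum>i\<in>{1..K}. 2 * N div p ^ i) = (\<Sum>i\<in>{1..K}. t i) + 2 * (\<Sum>i\<in>{1..K}. N div p ^ i)"
    unfolding t_def sum_distrib_left sum.distrib[symmetric]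
    by (rule sum.cong) (use div2_bounds p1 in auto)
  have e_eq: "e = (\<Sum>i\<in>{1..K}. t i)" using eq tsum by simp
  have t0: "t i = 0" if "i \<ge> e" for i
  proof -
    have "p ^ e \<le> p ^ i" using that p1 by (intro power_increasing) auto
    hence "2 * N div p ^ i = 0" "N div p ^ i = 0" using pe by auto
    thus ?thesis unfolding t_def by simp
  qed
  have "(\<Sum>i\<in>{1..K}. t i) = (\<Sum>i\<in>{1..K} \<inter> {..<e}. t i)"
    by (rule sum.mono_neutral_right) (use t0 in \<open>auto simp: not_less\<close>)
  also have "\<dots> \<le> (\<Sum>i\<in>{1..K} \<inter> {..<e}. 1)" by (rule sum_mono) (use tle in auto)
  also have "\<dots> \<le> card {1..<e}"
  proof -
    have "{1..K} \<inter> {..<e} \<subseteq> {1..<e}" by auto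
    hence "card ({1..K} \<inter> {..<e}) \<le> card {1..<e}" by (intro card_mono) auto
    thus ?thesis by simp
  qed
  finally have le: "(\<Sum>i\<in>{1..K}. t i) \<le> e - 1" by simp
  hence "e \<le> e - 1" using e_eq by metis
  moreover have "e \<ge> 1" using pe N by (cases e) auto
  ultimately show False by simp
qed

lemma chebyshev_nat:
  fixes N :: nat
  assumes "N \<ge> 1"
  shows "(2 * N choose N) \<le> (2 * N) ^ card {p. prime p \<and> p \<le> 2 * N}"
proof -
  let ?C = "2 * N choose N"
  have C0: "?C \<noteq> 0" by simp
  have sub: "prime_factors ?C \<subseteq> {p. prime p \<and> p \<le> 2 * N}"
  proof
    fix p assume "p \<in> prime_factors ?C"
    hence pp: "prime p" and "p dvd ?C" by auto
    moreover have "?C dvd fact (2 * N)"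
      using binomial_fact_lemma[of N "2*N"] by (metis dvd_triv_right le_add2 mult_2)
    ultimately have "p dvd fact (2 * N)" by (meson dvd_trans)
    thus "p \<in> {p. prime p \<and> p \<le> 2 * N}" using pp prime_dvd_fact_iff by auto
  qed
  have "?C = (\<Prod>p\<in>prime_factors ?C. p ^ multiplicity p ?C)"
    using prod_prime_factors[OF C0] by simp
  also have "\<dots> \<le> (\<Prod>p\<in>prime_factors ?C. 2 * N)"
    by (rule prod_mono) (use mult_central assms in auto)
  also have "\<dots> = (2 * N) ^ card (prime_factors ?C)" by simp
  also have "\<dots> \<le> (2 * N) ^ card {p. prime p \<and> p \<le> 2 * N}"
    using assms by (intro power_increasing card_mono sub) auto
  finally show ?thesis .
qed

lemma chebyshev:
  fixes N :: nat
  assumes "N \<ge> 1"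
  shows "real N * ln 2 \<le> real (card {p. prime p \<and> p \<le> 2 * N}) * ln (2 * real N)"
proof -
  have "(real (2 * N) / real N) ^ N \<le> real (2 * N choose N)"
    by (rule binomial_ge_n_over_k_pow_k) simp
  hence "2 ^ N \<le> real (2 * N choose N)" using assms by simp
  also have "\<dots> \<le> real ((2 * N) ^ card {p. prime p \<and> p \<le> 2 * N})"
    using chebyshev_nat[OF assms] by linarith
  finally have "(2::real) ^ N \<le> (2 * real N) ^ card {p. prime p \<and> p \<le> 2 * N}" by simp
  hence "ln ((2::real) ^ N) \<le> ln ((2 * real N) ^ card {p. prime p \<and> p \<le> 2 * N})"
    using assms by (subst ln_le_cancel_iff) auto
  moreover have "ln ((2 * real N) ^ card {p. prime p \<and> p \<le> 2 * N}) = real (card {p. prime p \<and> p \<le> 2 * N}) * ln (2 * real N)"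
    by (rule ln_realpow)
  moreover have "ln ((2::real) ^ N) = real N * ln 2" by (simp add: ln_realpow)
  ultimately show ?thesis by simp
qed



lemma count_j:
  fixes b p :: nat
  assumes "b > 0"
  shows "real p / (2 * real b) \<le> real (card {j. 2 * j * b < p})"
proof (cases "p = 0")
  case True then show ?thesis by simp
next
  case False
  have iff: "2 * j * b < p \<longleftrightarrow> j \<le> (p - 1) div (2 * b)" for j
  proof -
    have "2 * j * b < p \<longleftrightarrow> j * (2 * b) \<le> p - 1" using False by (auto simp: mult.commute mult.left_commute)
    also have "\<dots> \<longleftrightarrow> j \<le> (p - 1) div (2 * b)" using assms by (simp add: less_eq_div_iff_mult_less_eq)
    finally show ?thesis .
  qed
  have eq: "{j. 2 * j * b < p} = {..(p - 1) div (2 * b)}" using iff by auto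
  define q where "q = (p - 1) div (2 * b)"
  define r where "r = (p - 1) mod (2 * b)"
  have pq: "p - 1 = 2 * b * q + r" unfolding q_def r_def by simp
  have r: "r < 2 * b" unfolding r_def using assms by simp
  have "p = 2 * b * q + r + 1" using pq False by simp
  hence "p \<le> 2 * b * (q + 1)" using r by simp
  hence "real p \<le> real (2 * b * (q + 1))" by (simp only: of_nat_le_iff)
  hence "real p \<le> 2 * real b * (real q + 1)" by (simp add: algebra_simps)
  hence "real p / (2 * real b) \<le> real q + 1" using assms by (simp add: divide_le_eq mult.commute)
  thus ?thesis unfolding eq q_def by simp
qed

lemma mulmod_inj:
  fixes p g :: nat
  assumes p: "prime p" and g: "0 < g" "g < p"
  shows "inj_on (\<lambda>s. s * g mod p) {..<p}"
proof (rule inj_onI)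
  fix s s' assume s: "s \<in> {..<p}" "s' \<in> {..<p}" and eq: "s * g mod p = s' * g mod p"
  have "\<not> p dvd g" using g by (auto dest: dvd_imp_le)
  hence "coprime p g" using p by (simp add: prime_imp_coprime)
  hence cop: "coprime g p" by (simp add: coprime_commute)
  have "[s * g = s' * g] (mod p)" using eq by (simp add: cong_def)
  hence "[s = s'] (mod p)" using cong_mult_rcancel_nat[OF cop] by simp
  thus "s = s'" using s cong_less_modulus_unique_nat by auto
qed

lemma mulmod_surj:
  fixes p g :: nat
  assumes p: "prime p" and g: "0 < g" "g < p"
  shows "(\<lambda>s. s * g mod p) ` {..<p} = {..<p}"
proof (rule endo_inj_surj)
  show "(\<lambda>s. s * g mod p) ` {..<p} \<subseteq> {..<p}" using p prime_gt_0_nat by auto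
qed (use mulmod_inj[OF assms] in auto)

lemma hash_zero:
  fixes p m s t w g u j i M :: nat
  assumes "s * g mod p = j * m" "2 * j * m * M < p" "t = i * m" "2 * i * m < p"
    "w = g * u" "u \<le> M"
  shows "hash p m s t w = 0"
proof -
  have jmu: "2 * (j * m * u) < p"
  proof -
    have "2 * (j * m * u) \<le> 2 * j * m * M" using assms(6) by (simp add: mult_le_mono)
    thus ?thesis using assms(2) by linarith
  qed
  have "s * w mod p = (s * g mod p) * u mod p" using assms(5) by (simp add: mod_mult_left_eq mult.assoc)
  also have "\<dots> = j * m * u" using assms(1) jmu by simp
  finally have sw: "s * w mod p = j * m * u" .
  have "(s * w + t) mod p = (s * w mod p + t) mod p" by (simp add: mod_add_left_eq)
  also have "\<dots> = j * m * u + i * m" using sw assms(3,4) jmu by simp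
  finally show ?thesis unfolding hash_def by simp
qed

lemma card_mult_image:
  fixes m :: nat and J :: "nat set"
  assumes "m > 0"
  shows "card ((\<lambda>j. j * m) ` J) = card J"
  by (rule card_image) (use assms in \<open>auto simp: inj_on_def\<close>)

lemma le_2jm:
  fixes j m :: nat
  assumes "0 < m"
  shows "j \<le> 2 * j * m"
proof -
  have "j * 1 \<le> j * (2 * m)" using assms by (intro mult_left_mono) auto
  thus ?thesis by (simp add: mult.commute mult.left_commute)
qed

lemma hash_bound:
  fixes p m :: nat and X :: "nat set"
  assumes p: "prime p" and m: "0 < m" "m \<le> p" and X: "finite X" "X \<noteq> {}" "\<forall>y\<in>X. 0 < y \<and> y < p"
  shows "(\<Sum>y\<in>X. \<Sum>z\<in>X. real (gcd y z) / real (max y z)) / (8 * real m * real (card X) ^ 2)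
           \<le> cond_prob p m X 0 0 0"
proof -
  define k where "k = card X"
  have k0: "k > 0" unfolding k_def using X by (simp add: card_gt_0_iff)
  have p0: "p > 0" using p prime_gt_0_nat by blast
  define A where "A = {t. t < p \<and> t mod m = 0}"
  define Tg where "Tg = (\<lambda>i. i * m) ` {i. 2 * i * m < p}"
  define E where "E M = (\<lambda>j. j * m) ` {j. 2 * j * m * M < p}" for M
  define Mx where "Mx y z = max y z div gcd y z" for y z :: nat
  define Sg where "Sg y z = {s. s < p \<and> s * gcd y z mod p \<in> E (Mx y z)}" for y z
  define NumS where "NumS = {(\<sigma>, \<tau>, y, z). \<sigma> < p \<and> \<tau> < p \<and> y \<in> X \<and> z \<in> X \<and>
                 hash p m \<sigma> \<tau> 0 = 0 \<and> hash p m \<sigma> \<tau> y = 0 \<and> hash p m \<sigma> \<tau> z = 0}"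
  define DenS where "DenS = {(\<sigma>, \<tau>, y, z). \<sigma> < p \<and> \<tau> < p \<and> y \<in> X \<and> z \<in> X \<and>
                 hash p m \<sigma> \<tau> 0 = 0}"
  have cp: "cond_prob p m X 0 0 0 = real (card NumS) / real (card DenS)"
    unfolding cond_prob_def NumS_def DenS_def ..
  have "DenS = {..<p} \<times> (A \<times> (X \<times> X))"
    unfolding DenS_def A_def hash_def by auto
  hence cDen: "card DenS = p * card A * (k * k)"
    unfolding k_def by (simp add: card_cartesian_product)
  have cA: "real (card A) \<le> 2 * real p / real m"
  proof -
    have "inj_on (\<lambda>t. t div m) A" unfolding A_def inj_on_def
      by (metis (mono_tags, lifting) mem_Collect_eq mult_div_mod_eq add_0_right)
    moreover have "(\<lambda>t. t div m) ` A \<subseteq> {..p div m}" unfolding A_def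
      by (auto intro: div_le_mono)
    ultimately have "card A \<le> card {..p div m}" by (meson card_inj_on_le finite_atMost)
    hence "card A \<le> p div m + 1" by simp
    hence "real (card A) \<le> real (p div m) + 1" by linarith
    also have "real (p div m) \<le> real p / real m" by (rule of_nat_div_le_of_nat)
    also have "1 \<le> real p / real m" using m by simp
    finally show ?thesis by simp
  qed
  have Mpos: "Mx y z > 0" if "y \<in> X" "z \<in> X" for y z
    unfolding Mx_def using X that
    by (metis dvd_div_eq_0_iff gcd_dvd1 gcd_dvd2 gcd_eq_0_iff max_def neq0_conv)
  have cTg: "real p / (2 * real m) \<le> real (card Tg)"
    unfolding Tg_def card_mult_image[OF m(1)] using count_j[OF m(1), of p] by simp
  have cSg: "real p / (2 * (real m * real (Mx y z))) \<le> real (card (Sg y z))" if yz: "y \<in> X" "z \<in> X" for y z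
  proof -
    let ?g = "gcd y z"
    let ?F = "\<lambda>s. s * ?g mod p"
    have g: "0 < ?g" "?g < p"
    proof -
      show "0 < ?g" using X yz by auto
      have "?g \<le> y" using X yz by (simp add: gcd_le1_nat)
      moreover have "y < p" using X yz by auto
      ultimately show "?g < p" by linarith
    qed
    have inj: "inj_on ?F {..<p}" by (rule mulmod_inj[OF p g])
    have sur: "?F ` {..<p} = {..<p}" by (rule mulmod_surj[OF p g])
    have Esub: "E (Mx y z) \<subseteq> {..<p}"
    proof
      fix e assume "e \<in> E (Mx y z)"
      then obtain j where j: "e = j * m" "2 * j * m * Mx y z < p" unfolding E_def by auto
      have "j * m * 1 \<le> j * m * Mx y z" using Mpos[OF yz] by (intro mult_left_mono) auto
      moreover have "2 * j * m * Mx y z = 2 * (j * m * Mx y z)" by simp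
      ultimately have "e < p" using j by linarith
      thus "e \<in> {..<p}" by simp
    qed
    have SgS: "Sg y z \<subseteq> {..<p}" unfolding Sg_def by auto
    have "?F ` Sg y z = E (Mx y z)"
    proof
      show "?F ` Sg y z \<subseteq> E (Mx y z)" unfolding Sg_def by auto
      show "E (Mx y z) \<subseteq> ?F ` Sg y z"
      proof
        fix e assume e: "e \<in> E (Mx y z)"
        hence "e \<in> ?F ` {..<p}" using Esub sur by auto
        then obtain s where s: "s < p" "e = ?F s" by auto
        hence "s \<in> Sg y z" unfolding Sg_def using e by auto
        thus "e \<in> ?F ` Sg y z" using s by auto
      qed
    qed
    hence "card (Sg y z) = card (E (Mx y z))"
      using card_image[OF inj_on_subset[OF inj SgS]] by simp
    also have "\<dots> = card {j. 2 * j * (m * Mx y z) < p}"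
      unfolding E_def card_mult_image[OF m(1)] by (simp add: mult.assoc)
    finally have "card (Sg y z) = card {j. 2 * j * (m * Mx y z) < p}" .
    moreover have "real p / (2 * real (m * Mx y z)) \<le> real (card {j. 2 * j * (m * Mx y z) < p})"
      by (rule count_j) (use m Mpos[OF yz] in simp)
    ultimately show ?thesis by simp
  qed
  define SIG where "SIG = (SIGMA yz:X \<times> X. Sg (fst yz) (snd yz) \<times> Tg)"
  define f where "f = (\<lambda>(yz :: nat \<times> nat, st :: nat \<times> nat). (fst st, snd st, fst yz, snd yz))"
  have finSg: "finite (Sg y z)" for y z unfolding Sg_def by simp
  have "{i. 2 * i * m < p} \<subseteq> {..<p}"
  proof
    fix i assume "i \<in> {i. 2 * i * m < p}"
    hence "2 * i * m < p" by simp
    moreover have "i \<le> 2 * i * m" by (rule le_2jm[OF m(1)])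
    ultimately have "i < p" by linarith
    thus "i \<in> {..<p}" by simp
  qed
  hence finTg: "finite Tg" unfolding Tg_def
    by (intro finite_imageI) (rule finite_subset, auto)
  have "f ` SIG \<subseteq> NumS"
  proof
    fix v assume "v \<in> f ` SIG"
    then obtain y z s t where yz: "y \<in> X" "z \<in> X" and s: "s \<in> Sg y z" and t: "t \<in> Tg"
      and v: "v = (s, t, y, z)"
      unfolding SIG_def f_def by auto
    obtain j where j: "s * gcd y z mod p = j * m" "2 * j * m * Mx y z < p" "s < p"
      using s unfolding Sg_def E_def by auto
    obtain i where i: "t = i * m" "2 * i * m < p" using t unfolding Tg_def by auto
    have "i * m \<le> 2 * i * m" by simp
    hence tp: "t < p" using i by linarith
    have hw: "hash p m s t w = 0" if "w \<in> {0, y, z}" for w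
    proof -
      have "gcd y z dvd w" using that by auto
      then obtain u where u: "w = gcd y z * u" by (auto elim: dvdE)
      have "u \<le> Mx y z"
      proof (cases "u = 0")
        case False
        have "w \<le> max y z" using that by auto
        hence "gcd y z * u \<le> max y z" using u by simp
        hence ug: "u * gcd y z \<le> max y z" by (simp add: mult.commute)
        have gpos: "gcd y z > 0" using yz X by auto
        have "u \<le> max y z div gcd y z \<longleftrightarrow> u * gcd y z \<le> max y z"
          by (rule less_eq_div_iff_mult_less_eq[OF gpos])
        hence "u \<le> max y z div gcd y z" using ug by simp
        thus ?thesis unfolding Mx_def .
      qed simp
      thus ?thesis using hash_zero[OF j(1) j(2) i(1) i(2) u] by simp
    qed
    show "v \<in> NumS" unfolding NumS_def v using yz j(3) tp hw by auto
  qed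
  moreover have "finite NumS"
  proof (rule finite_subset)
    show "NumS \<subseteq> {..<p} \<times> {..<p} \<times> X \<times> X" unfolding NumS_def by auto
  qed (use X in simp)
  ultimately have "card (f ` SIG) \<le> card NumS" by (simp add: card_mono)
  moreover have "inj_on f SIG" unfolding f_def inj_on_def by auto
  ultimately have "card SIG \<le> card NumS" by (simp add: card_image)
  moreover have "card SIG = (\<Sum>yz\<in>X \<times> X. card (Sg (fst yz) (snd yz)) * card Tg)"
    unfolding SIG_def using X finSg finTg by (simp add: card_cartesian_product)
  ultimately have cNum: "(\<Sum>yz\<in>X \<times> X. real (card (Sg (fst yz) (snd yz))) * real (card Tg)) \<le> real (card NumS)"
    by (simp only: of_nat_mult[symmetric] of_nat_sum[symmetric] of_nat_le_iff)
  define S where "S = (\<Sum>y\<in>X. \<Sum>z\<in>X. real (gcd y z) / real (max y z))"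
  have termeq: "real (gcd y z) / real (max y z) = 1 / real (Mx y z)" if "y \<in> X" "z \<in> X" for y z
  proof -
    have "gcd y z dvd max y z" by (simp add: max_def)
    hence "real (Mx y z) = real (max y z) / real (gcd y z)" unfolding Mx_def by (simp add: real_of_nat_div)
    moreover have "gcd y z > 0" "max y z > 0" using that X by auto
    ultimately show ?thesis by simp
  qed
  have "(real p * real p / (4 * real m * real m)) * S
      = (\<Sum>yz\<in>X \<times> X. (real p / (2 * (real m * real (Mx (fst yz) (snd yz))))) * (real p / (2 * real m)))"
    unfolding S_def sum.cartesian_product sum_distrib_left
    by (rule sum.cong) (auto simp: termeq field_simps)
  also have "\<dots> \<le> (\<Sum>yz\<in>X \<times> X. real (card (Sg (fst yz) (snd yz))) * real (card Tg))"
    by (rule sum_mono, rule mult_mono) (use cSg cTg in auto)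
  also have "\<dots> \<le> real (card NumS)" by (rule cNum)
  finally have numb: "(real p * real p / (4 * real m * real m)) * S \<le> real (card NumS)" .
  have denb: "real (card DenS) \<le> 2 * real p * real p * real k * real k / real m"
  proof -
    have "real (card DenS) = real p * real (card A) * (real k * real k)" using cDen by simp
    also have "\<dots> \<le> real p * (2 * real p / real m) * (real k * real k)"
      by (intro mult_right_mono mult_left_mono cA) auto
    finally show ?thesis by (simp add: algebra_simps)
  qed
  have Dpos: "real (card DenS) > 0"
  proof -
    have "0 \<in> A" unfolding A_def using p0 by simp
    hence "card A > 0" unfolding A_def by (auto simp: card_gt_0_iff)
    thus ?thesis using cDen p0 k0 by simp
  qed
  have S0: "S \<ge> 0" unfolding S_def by (intro sum_nonneg) auto
  have "S / (8 * real m * real k ^ 2) = ((real p * real p / (4 * real m * real m)) * S) / (2 * real p * real p * real k * real k / real m)"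
    using m p0 k0 by (simp add: field_simps power2_eq_square)
  also have "\<dots> \<le> real (card NumS) / real (card DenS)"
    by (rule frac_le) (use numb denb Dpos S0 m p0 k0 in auto)
  finally show ?thesis unfolding cp S_def k_def .
qed



definition prodS :: "nat set \<Rightarrow> nat" where "prodS S = (\<Prod>q\<in>S. q)"

lemma prodS_inj:
  assumes "finite P" "\<forall>q\<in>P. prime q"
  shows "inj_on prodS (Pow P)"
proof (rule inj_onI)
  fix S S' assume S: "S \<in> Pow P" "S' \<in> Pow P" and eq: "prodS S = prodS S'"
  have key: "S = {q\<in>P. q dvd prodS S}" if "S \<subseteq> P" for S
  proof -
    have fin: "finite S" using that assms(1) finite_subset by blast
    have "q dvd prodS S \<longleftrightarrow> q \<in> S" if "q \<in> P" for q
    proof -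
      have "q dvd prodS S \<longleftrightarrow> (\<exists>x\<in>S. q dvd x)"
        unfolding prodS_def using fin assms(2) \<open>q \<in> P\<close> by (simp add: prime_dvd_prod_iff)
      also have "\<dots> \<longleftrightarrow> q \<in> S"
      proof
        assume "\<exists>x\<in>S. q dvd x"
        then obtain x where x: "x \<in> S" "q dvd x" by blast
        have "prime x" "prime q" using x(1) \<open>S \<subseteq> P\<close> assms(2) \<open>q \<in> P\<close> by auto
        hence "q = x" using x(2) primes_dvd_imp_eq by blast
        thus "q \<in> S" using x(1) by simp
      next
        assume "q \<in> S" thus "\<exists>x\<in>S. q dvd x" using dvd_refl by blast
      qed
      finally show ?thesis .
    qed
    thus ?thesis using that by auto
  qed
  show "S = S'" using key[of S] key[of S'] S eq by auto
qed

lemma prodS_pos: "\<forall>q\<in>S. prime q \<Longrightarrow> prodS S > 0"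
  unfolding prodS_def by (metis not_prime_0 prod_pos neq0_conv)

lemma prodS_le:
  assumes "\<forall>q\<in>S. q \<le> T" "finite S"
  shows "prodS S \<le> T ^ card S"
  unfolding prodS_def using assms
  by (metis prod_constant prod_mono zero_le)

lemma prodS_split:
  assumes "finite S" "C \<subseteq> S"
  shows "prodS S = prodS C * prodS (S - C)"
  unfolding prodS_def using prod.subset_diff[OF assms(2) assms(1), of "\<lambda>q. q"] by (simp add: mult.commute)

lemma pair_bound:
  fixes S S' :: "nat set" and T :: nat
  assumes fin: "finite S" "finite S'" and pr: "\<forall>q\<in>S \<union> S'. prime q \<and> q \<le> T"
    and card: "card S = card S'" and j: "card (S - S') = j"
  shows "1 / real T ^ j \<le> real (gcd (prodS S) (prodS S')) / real (max (prodS S) (prodS S'))"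
proof -
  define C where "C = S \<inter> S'"
  have sS: "prodS S = prodS C * prodS (S - C)" using prodS_split[OF fin(1), of C] C_def by auto
  have sS': "prodS S' = prodS C * prodS (S' - C)" using prodS_split[OF fin(2), of C] C_def by auto
  have jj: "card (S' - C) = j"
  proof -
    have "card (S - C) = card S - card C" using fin C_def by (simp add: card_Diff_subset)
    moreover have "card (S' - C) = card S' - card C" using fin C_def by (simp add: card_Diff_subset)
    moreover have "S - C = S - S'" unfolding C_def by auto
    ultimately show ?thesis using card j by simp
  qed
  have "S - C = S - S'" unfolding C_def by auto
  hence j1: "card (S - C) = j" using j by simp
  have Cpos: "prodS C > 0" using pr C_def by (intro prodS_pos) auto
  have T0: "T > 0" if "j > 0"
  proof -
    from that j obtain q where "q \<in> S" using card_gt_0_iff by fastforce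
    hence "prime q" "q \<le> T" using pr by auto
    thus ?thesis using prime_gt_0_nat by (metis le_0_eq neq0_conv)
  qed
  have b1: "prodS (S - C) \<le> T ^ j" using prodS_le[of "S - C" T] pr fin j1 by auto
  have b2: "prodS (S' - C) \<le> T ^ j" using prodS_le[of "S' - C" T] pr fin jj by auto
  have "prodS S \<le> prodS C * T ^ j" unfolding sS by (rule mult_le_mono2[OF b1])
  moreover have "prodS S' \<le> prodS C * T ^ j" unfolding sS' by (rule mult_le_mono2[OF b2])
  ultimately have "max (prodS S) (prodS S') \<le> prodS C * T ^ j" by simp
  hence "real (max (prodS S) (prodS S')) \<le> real (prodS C * T ^ j)" by (simp only: of_nat_le_iff)
  hence mx: "real (max (prodS S) (prodS S')) \<le> real (prodS C) * real T ^ j" by simp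
  have pS: "prodS S > 0" "prodS S' > 0" using pr by (auto intro!: prodS_pos)
  have "prodS C dvd gcd (prodS S) (prodS S')" using sS sS' by simp
  moreover have "gcd (prodS S) (prodS S') > 0" using pS by simp
  ultimately have gc: "prodS C \<le> gcd (prodS S) (prodS S')" by (simp add: dvd_imp_le)
  have mpos: "real (max (prodS S) (prodS S')) > 0" using pS by simp
  have Tpos: "real T ^ j > 0" using T0 by (cases "j = 0") auto
  have "1 / real T ^ j = real (prodS C) / (real (prodS C) * real T ^ j)" using Cpos Tpos by simp
  also have "\<dots> \<le> real (prodS C) / real (max (prodS S) (prodS S'))"
    by (rule divide_left_mono) (use mx mpos Cpos Tpos in auto)
  also have "\<dots> \<le> real (gcd (prodS S) (prodS S')) / real (max (prodS S) (prodS S'))"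
    by (rule divide_right_mono) (use gc in auto)
  finally show ?thesis .
qed

lemma family_bound:
  fixes P :: "nat set" and n r j T :: nat
  assumes finP: "finite P" and pr: "\<forall>q\<in>P. prime q \<and> q \<le> T" and cP: "card P = n" and rn: "r \<le> n"
  defines "F \<equiv> {S. S \<subseteq> P \<and> card S = r}"
  defines "D \<equiv> prodS ` F"
  shows "card D = n choose r"
    and "real (card D) * (real (r choose j) * real ((n - r) choose j) / real T ^ j)
           \<le> (\<Sum>y\<in>D. \<Sum>z\<in>D. real (gcd y z) / real (max y z))"
proof -
  have injF: "inj_on prodS F"
    by (rule inj_on_subset[OF prodS_inj[OF finP]]) (use pr F_def in auto)
  have finF: "finite F" unfolding F_def using finP by simp
  have cDF: "card D = card F" unfolding D_def by (rule card_image[OF injF])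
  also have "card F = n choose r" unfolding F_def using n_subsets[OF finP] cP by simp
  finally show cD: "card D = n choose r" .
  let ?f = "\<lambda>y z. real (gcd y z) / real (max y z)"
  define c where "c = real (r choose j) * real ((n - r) choose j) / real T ^ j"
  have inner: "c \<le> (\<Sum>z\<in>D. ?f (prodS S) z)" if S: "S \<in> F" for S
  proof -
    have SP: "S \<subseteq> P" and cS: "card S = r" using S F_def by auto
    have finS: "finite S" using SP finP finite_subset by blast
    define I where "I = {A. A \<subseteq> S \<and> card A = j} \<times> {B. B \<subseteq> P - S \<and> card B = j}"
    define g where "g = (\<lambda>(A, B). (S - A) \<union> B)"
    have finI: "finite I" unfolding I_def using finS finP by simp
    have cI: "card I = (r choose j) * ((n - r) choose j)"
    proof -
      have "card (P - S) = n - r" using SP finP cP cS by (simp add: card_Diff_subset finS)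
      thus ?thesis unfolding I_def card_cartesian_product
        using n_subsets[OF finS] n_subsets[of "P - S"] finP cS by simp
    qed
    have gF: "g i \<in> F" and gdiff: "S - g i = fst i" and gc: "card (S - g i) = j" if i: "i \<in> I" for i
    proof -
      obtain A B where iAB: "i = (A, B)" by (cases i)
      have A: "A \<subseteq> S" "card A = j" and B: "B \<subseteq> P - S" "card B = j" using i iAB I_def by auto
      have finA: "finite A" using A finS finite_subset by blast
      have finB: "finite B" using B finP finite_subset by blast
      have gi: "g i = (S - A) \<union> B" using iAB g_def by simp
      have disj: "(S - A) \<inter> B = {}" using B by auto
      have "card (g i) = card (S - A) + card B" unfolding gi
        using card_Un_disjoint[OF _ finB disj] finS by simp
      also have "card (S - A) = r - j" using A cS finS by (simp add: card_Diff_subset finA)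
      finally have "card (g i) = r" using A cS card_mono[OF finS A(1)] B by simp
      moreover have "g i \<subseteq> P" using gi SP B by auto
      ultimately show "g i \<in> F" unfolding F_def by simp
      show "S - g i = fst i" using gi iAB A B by auto
      thus "card (S - g i) = j" using iAB A by simp
    qed
    have injg: "inj_on g I"
    proof (rule inj_onI)
      fix i i' assume ii: "i \<in> I" "i' \<in> I" and eq: "g i = g i'"
      have "fst i = fst i'" using gdiff[OF ii(1)] gdiff[OF ii(2)] eq by simp
      moreover have "snd i = g i - S" "snd i' = g i' - S" using ii unfolding I_def g_def by auto
      ultimately show "i = i'" using eq by (simp add: prod_eq_iff)
    qed
    have "g ` I \<subseteq> F" using gF by blast
    hence injpg: "inj_on (prodS \<circ> g) I"
      using comp_inj_on[OF injg inj_on_subset[OF injF]] by blast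
    have sub: "(prodS \<circ> g) ` I \<subseteq> D" unfolding D_def using gF by auto
    have "c = (\<Sum>i\<in>I. 1 / real T ^ j)" unfolding c_def using cI by simp
    also have "\<dots> \<le> (\<Sum>i\<in>I. ?f (prodS S) ((prodS \<circ> g) i))"
    proof (rule sum_mono)
      fix i assume i: "i \<in> I"
      have gP: "g i \<subseteq> P" and cg: "card (g i) = r" using gF[OF i] F_def by auto
      have fing: "finite (g i)" using gP finP finite_subset by blast
      show "1 / real T ^ j \<le> ?f (prodS S) ((prodS \<circ> g) i)"
        unfolding o_def
        by (rule pair_bound[OF finS fing]) (use SP gP pr cS cg gc[OF i] in auto)
    qed
    also have "\<dots> = (\<Sum>z\<in>(prodS \<circ> g) ` I. ?f (prodS S) z)"
      unfolding sum.reindex[OF injpg] by (simp add: o_def)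
    also have "\<dots> \<le> (\<Sum>z\<in>D. ?f (prodS S) z)"
      by (rule sum_mono2) (use sub finF D_def in auto)
    finally show ?thesis .
  qed
  have "real (card D) * c = (\<Sum>S\<in>F. c)" unfolding cDF by simp
  also have "\<dots> \<le> (\<Sum>S\<in>F. \<Sum>z\<in>D. ?f (prodS S) z)" by (rule sum_mono) (rule inner)
  also have "\<dots> = (\<Sum>y\<in>D. \<Sum>z\<in>D. ?f y z)" unfolding D_def
    unfolding sum.reindex[OF injF] by (simp add: o_def)
  finally show "real (card D) * (real (r choose j) * real ((n - r) choose j) / real T ^ j)
           \<le> (\<Sum>y\<in>D. \<Sum>z\<in>D. real (gcd y z) / real (max y z))" unfolding c_def D_def .
qed



lemma ln_le_2sqrt:
  fixes x :: real assumes "0 < x" shows "ln x \<le> 2 * sqrt x"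
proof -
  have "ln x = 2 * ln (sqrt x)" using assms by (simp add: ln_sqrt)
  also have "ln (sqrt x) \<le> sqrt x - 1" using assms by (intro ln_le_minus_one) simp
  finally show ?thesis by simp
qed

lemma ln_sq_le:
  fixes x :: real assumes "1 \<le> x" shows "(ln x)\<^sup>2 \<le> 16 * sqrt x"
proof -
  have s: "0 < sqrt x" using assms by simp
  have "ln x = 2 * ln (sqrt x)" using assms by (simp add: ln_sqrt)
  also have "ln (sqrt x) \<le> 2 * sqrt (sqrt x)" using ln_le_2sqrt[OF s] .
  finally have a: "ln x \<le> 4 * sqrt (sqrt x)" by simp
  have b: "0 \<le> ln x" using assms by simp
  have "(ln x)\<^sup>2 \<le> (4 * sqrt (sqrt x))\<^sup>2" using a b by (intro power_mono) auto
  also have "\<dots> = 16 * sqrt x" using assms by (simp add: power_mult_distrib)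
  finally show ?thesis .
qed

lemma ln2_ge_half: "1/2 \<le> ln (2::real)"
proof -
  have "ln (1/2::real) \<le> 1/2 - 1" by (intro ln_le_minus_one) simp
  thus ?thesis by (simp add: ln_div)
qed

lemma binom_succ_le:
  fixes n r :: nat assumes "2 * r \<le> n + 1"
  shows "(Suc n choose r) \<le> 2 * (n choose r)"
proof -
  have eq: "(Suc n - r) * (Suc n choose r) = Suc n * (n choose r)"
    using binomial_absorb_comp[of "Suc n" r] by simp
  have pos: "Suc n - r > 0" using assms by simp
  have "Suc n \<le> 2 * (Suc n - r)" using assms by simp
  hence "(Suc n - r) * (Suc n choose r) \<le> (Suc n - r) * (2 * (n choose r))"
    unfolding eq by (metis mult.assoc mult.commute mult_le_mono1)
  thus ?thesis using pos by simp
qed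

lemma choose_n:
  fixes r k :: nat
  assumes r: "1 \<le> r" and k: "2 \<le> k" and c2: "(2 * r choose r) \<le> k"
  shows "\<exists>n. 2 * r \<le> n \<and> (n choose r) \<le> k \<and> k < (Suc n choose r)"
proof -
  let ?Q = "\<lambda>n. 2 * r \<le> n \<and> k < (Suc n choose r)"
  define n0 where "n0 = (k + 1) * r - 1"
  have n0: "Suc n0 = (k + 1) * r" unfolding n0_def using r by simp
  have h: "(real ((k + 1) * r) / real r) ^ r \<le> real ((k + 1) * r choose r)"
    by (rule binomial_ge_n_over_k_pow_k) simp
  have "real ((k + 1) * r) / real r = real (k + 1)"
    using r by (simp only: of_nat_mult) simp
  hence "real (k + 1) ^ r \<le> real ((k + 1) * r choose r)" using h by simp
  moreover have "real (k + 1) \<le> real (k + 1) ^ r" using r by (simp add: self_le_power)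
  ultimately have "k < ((k + 1) * r choose r)" by linarith
  moreover have "2 * r \<le> n0" unfolding n0_def using k r
    by (metis Suc_1 add_le_imp_le_diff add_mono_thms_linordered_semiring(1) mult_le_mono1 nat_mult_1 one_add_one add.commute le_add1 mult.commute Suc_le_eq mult_Suc_right)
  ultimately have Qn0: "?Q n0" using n0 by simp
  define n where "n = (LEAST n. ?Q n)"
  have Qn: "?Q n" unfolding n_def by (rule LeastI[of ?Q n0, OF Qn0])
  have "(n choose r) \<le> k"
  proof (cases "n = 2 * r")
    case True thus ?thesis using c2 by simp
  next
    case False
    hence "n - 1 < n" "2 * r \<le> n - 1" using Qn r by auto
    hence "\<not> ?Q (n - 1)" unfolding n_def using not_less_Least by blast
    hence "\<not> k < (Suc (n - 1) choose r)" using \<open>2 * r \<le> n - 1\<close> by simp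
    moreover have "Suc (n - 1) = n" using Qn r by simp
    ultimately show ?thesis by simp
  qed
  thus ?thesis using Qn by blast
qed

lemma ln16: "2 \<le> ln (16::real)"
proof -
  have "ln (16::real) = ln (2 ^ 4)" by simp
  also have "\<dots> = 4 * ln 2" by (subst ln_realpow) auto
  finally show ?thesis using ln2_ge_half by simp
qed

lemma ln32: "ln (32::real) \<le> 5"
proof -
  have "ln (32::real) = ln (2 ^ 5)" by simp
  also have "\<dots> = 5 * ln 2" by (subst ln_realpow) auto
  finally show ?thesis using ln_2_less_1 by simp
qed

lemma ln_ln_le: "1 \<le> x \<Longrightarrow> ln (x + 1) \<le> (x::real)"
  using ln_le_minus_one[of "x + 1"] by simp

lemma chebT:
  fixes n :: nat assumes n: "16 \<le> n"
  defines "T \<equiv> 16 * n * nat \<lceil>ln (real n)\<rceil>"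
  shows "n \<le> card {q. prime q \<and> q \<le> T}" "real T \<le> 32 * real n * ln (real n)" "0 < T"
proof -
  define c where "c = nat \<lceil>ln (real n)\<rceil>"
  have ln2n: "2 \<le> ln (real n)"
  proof -
    have "ln (16::real) \<le> ln (real n)" using n by (subst ln_le_cancel_iff) auto
    thus ?thesis using ln16 by simp
  qed
  have c1: "ln (real n) \<le> real c" unfolding c_def by linarith
  have c2: "real c \<le> ln (real n) + 1" unfolding c_def using ln2n by linarith
  have cpos: "0 < c" using c1 ln2n by simp
  define N where "N = 8 * n * c"
  have N1: "1 \<le> N" unfolding N_def using n cpos by simp
  have TN: "T = 2 * N" unfolding T_def N_def c_def by simp
  have cheb: "real N * ln 2 \<le> real (card {q. prime q \<and> q \<le> 2 * N}) * ln (2 * real N)"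
    by (rule chebyshev[OF N1])
  have lo: "4 * real n * ln (real n) \<le> real N * ln 2"
  proof -
    have "4 * real n * ln (real n) \<le> 4 * real n * real c" using c1 by (simp add: mult_left_mono)
    also have "\<dots> = real N * (1/2)" unfolding N_def by simp
    also have "\<dots> \<le> real N * ln 2" using ln2_ge_half by (intro mult_left_mono) auto
    finally show ?thesis .
  qed
  have hi: "ln (2 * real N) \<le> 4 * ln (real n)"
  proof -
    have "2 * real N = 16 * real n * real c" unfolding N_def by simp
    hence eq: "ln (2 * real N) = ln 16 + ln (real n) + ln (real c)" using n cpos by (simp add: ln_mult)
    have "ln (real c) \<le> ln (ln (real n) + 1)" using c2 cpos by (subst ln_le_cancel_iff) auto
    also have "\<dots> \<le> ln (real n)" using ln_ln_le ln2n by simp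
    finally have lc: "ln (real c) \<le> ln (real n)" .
    have "ln (16::real) = ln (2 ^ 4)" by simp
    also have "\<dots> = 4 * ln 2" by (subst ln_realpow) auto
    finally have l16: "ln (16::real) \<le> 4" using ln_2_less_1 by simp
    show ?thesis using eq lc l16 ln2n by linarith
  qed
  have "4 * real n * ln (real n) \<le> real (card {q. prime q \<and> q \<le> 2 * N}) * (4 * ln (real n))"
    using lo cheb hi by (meson mult_left_mono of_nat_0_le_iff order_trans)
  hence "real n \<le> real (card {q. prime q \<and> q \<le> 2 * N})" using ln2n by simp
  thus "n \<le> card {q. prime q \<and> q \<le> T}" unfolding TN by simp
  have "real T = 16 * real n * real c" unfolding T_def c_def by simp
  also have "\<dots> \<le> 16 * real n * (2 * ln (real n))" using c2 ln2n by (intro mult_left_mono) auto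
  finally show "real T \<le> 32 * real n * ln (real n)" by simp
  show "0 < T" unfolding TN N_def using n cpos by simp
qed

lemma params:
  fixes \<epsilon> :: real
  assumes "\<epsilon> > 0"
  shows "\<exists>c>0. \<exists>K0::nat. \<forall>(k::nat) (U::nat). k \<ge> K0 \<and> real U \<ge> real k powr (1 + \<epsilon>) \<longrightarrow>
     1 \<le> k \<and> k < U \<and> (\<exists>r n T j. 2 * r \<le> n \<and> n \<le> card {q. prime q \<and> q \<le> T} \<and> T ^ r < U \<and>
        (n choose r) \<le> k \<and> k \<le> 2 * (n choose r) \<and> j \<le> r \<and> 2 * j ^ 2 * T \<le> r * (n - r) \<and>
        16 * exp (c * sqrt (min (ln (real k) / ln (ln (real k)))
                                   (ln (real U) / (ln (ln (real U)))\<^sup>2))) \<le> 2 ^ j)"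
proof -
  define e where "e = min \<epsilon> 1"
  have e: "0 < e" "e \<le> 1" "e \<le> \<epsilon>" unfolding e_def using assms by auto
  define \<eta> where "\<eta> = e / 8"
  have \<eta>: "0 < \<eta>" "\<eta> \<le> 1" unfolding \<eta>_def using e by auto
  define s0 where "s0 = 16 * (640 / \<eta>)\<^sup>2 + 18 / \<eta> + 4 / \<eta> + 27"
  define \<Lambda>0 where "\<Lambda>0 = max (exp 16) (s0\<^sup>2)"
  define c where "c = \<eta> * ln 2 / 128"
  have cpos: "c > 0" unfolding c_def using \<eta> by simp
  define K0 where "K0 = nat \<lceil>exp \<Lambda>0\<rceil>"
  show ?thesis
  proof (rule exI[of _ c], rule conjI[OF cpos], rule exI[of _ K0], intro allI impI)
    fix k U :: nat
    assume kU: "K0 \<le> k \<and> real k powr (1 + \<epsilon>) \<le> real U"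
    have kbig: "exp \<Lambda>0 \<le> real k" using kU unfolding K0_def by linarith
    have kpos: "0 < real k" using kbig by (smt (verit) exp_gt_zero)
    define lam where "lam = ln (real k)"
    have lam0: "\<Lambda>0 \<le> lam" unfolding lam_def using kbig kpos by (metis ln_exp ln_le_cancel_iff exp_gt_zero)
    have p1: "0 \<le> 16 * (640 / \<eta>)\<^sup>2" by simp
    have p2: "0 \<le> 18 / \<eta>" "0 \<le> 4 / \<eta>" using \<eta> by auto
    have s0pos: "s0 \<ge> 27" unfolding s0_def using p1 p2 by linarith
    have s0a: "16 * (640 / \<eta>)\<^sup>2 \<le> s0" unfolding s0_def using p1 p2 by linarith
    have s0b: "2 + 4 / \<eta> + 16 \<le> s0" unfolding s0_def using p1 p2 by linarith
    have lams: "s0 \<le> sqrt lam"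
    proof -
      have "s0\<^sup>2 \<le> lam" using lam0 unfolding \<Lambda>0_def by simp
      thus ?thesis using s0pos by (metis abs_of_nonneg real_sqrt_abs real_sqrt_le_mono order_trans less_imp_le
          dual_order.strict_trans2 zero_less_numeral)
    qed
    have lampos: "0 < lam" using lams s0pos by (smt (verit) real_sqrt_le_0_iff)
    have sl: "sqrt lam * sqrt lam = lam" using lampos by simp
    have lame16: "exp 16 \<le> lam" using lam0 unfolding \<Lambda>0_def by simp
    have lnlam: "16 \<le> ln lam" using lame16 lampos by (metis ln_exp ln_le_cancel_iff exp_gt_zero)
    have lam1: "1 < lam" using lnlam lampos ln_gt_zero_iff by fastforce
    have k1: "1 < real k" using lampos kpos unfolding lam_def by simp
    have "real k powr (1 + e) \<le> real k powr (1 + \<epsilon>)" using k1 e by (intro powr_mono) auto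
    hence Uk: "real k powr (1 + e) \<le> real U" using kU by simp
    have "real k powr (1 + e) = real k * real k powr e" using kpos by (simp add: powr_add)
    moreover have "1 < real k powr e" using k1 e by simp
    ultimately have "real k < real k powr (1 + e)" using kpos by simp
    hence kltU: "k < U" using Uk by simp
    have Upos: "0 < real U" using kltU by simp
    define \<mu> where "\<mu> = ln (real U)"
    have \<mu>lam: "(1 + e) * lam \<le> \<mu>"
    proof -
      have "ln (real k powr (1 + e)) \<le> \<mu>" unfolding \<mu>_def using Uk kpos Upos by (subst ln_le_cancel_iff) auto
      thus ?thesis unfolding lam_def by simp
    qed
    have \<mu>ge: "lam \<le> \<mu>" using \<mu>lam e lampos by (smt (verit) mult_le_cancel_right1)
    have \<mu>pos: "0 < \<mu>" using \<mu>ge lampos by simp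
    have ln\<mu>: "16 \<le> ln \<mu>" using lnlam \<mu>ge lampos by (smt (verit) ln_le_cancel_iff)
    have sm: "sqrt lam \<le> sqrt \<mu>" using \<mu>ge by simp
    have \<mu>1: "1 < \<mu>" using ln\<mu> \<mu>pos ln_gt_zero_iff by fastforce
    define \<rho> where "\<rho> = min (lam / 8) (\<eta> * \<mu> / ln \<mu>)"
    have lnmu_sqrt: "ln \<mu> \<le> 2 * sqrt \<mu>" by (rule ln_le_2sqrt[OF \<mu>pos])
    have smu: "sqrt \<mu> * sqrt \<mu> = \<mu>" using \<mu>pos by simp
    have b2: "\<eta> * sqrt lam / 2 \<le> \<eta> * \<mu> / ln \<mu>"
    proof -
      have "\<eta> * sqrt \<mu> / 2 = \<eta> * \<mu> / (2 * sqrt \<mu>)" using \<mu>pos smu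
        by (metis divide_divide_eq_left' mult_2_right nonzero_mult_div_cancel_left times_divide_eq_right
            real_sqrt_gt_0_iff less_irrefl)
      also have "\<dots> \<le> \<eta> * \<mu> / ln \<mu>" using lnmu_sqrt ln\<mu> \<eta> \<mu>pos \<mu>1
        by (intro divide_left_mono) (auto simp: zero_less_mult_iff)
      finally show ?thesis using sm \<eta> by (smt (verit) divide_right_mono mult_left_mono)
    qed
    have \<rho>lo: "min (lam / 8) (\<eta> * sqrt lam / 2) \<le> \<rho>" unfolding \<rho>_def using b2 by linarith
    have s0\<eta>: "18 / \<eta> \<le> s0" unfolding s0_def using p1 p2 by linarith
    have lam8: "9 \<le> lam / 8"
    proof -
      have "27 * 27 \<le> sqrt lam * sqrt lam" using lams s0pos lampos by (intro mult_mono) auto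
      thus ?thesis using sl by simp
    qed
    have \<eta>s: "9 \<le> \<eta> * sqrt lam / 2"
    proof -
      have "18 / \<eta> \<le> sqrt lam" using s0\<eta> lams by simp
      hence "\<eta> * (18 / \<eta>) \<le> \<eta> * sqrt lam" using \<eta> by (intro mult_left_mono) auto
      thus ?thesis using \<eta> by simp
    qed
    have \<rho>9: "9 \<le> \<rho>" using \<rho>lo lam8 \<eta>s by linarith
    define r where "r = nat \<lfloor>\<rho>\<rfloor>"
    have r1: "real r \<le> \<rho>" "\<rho> - 1 < real r" unfolding r_def using \<rho>9 by linarith+
    have r8: "8 \<le> r" using r1 \<rho>9 by linarith
    have r\<rho>: "\<rho> / 2 \<le> real r" using r1 \<rho>9 by linarith
    have rlam: "real r \<le> lam / 8" using r1 unfolding \<rho>_def by linarith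
    have r\<mu>: "real r \<le> \<eta> * \<mu> / ln \<mu>" using r1 unfolding \<rho>_def by linarith
    have c2r: "(2 * r choose r) \<le> k"
    proof -
      have "(2 * r choose r) \<le> 2 ^ (2 * r)" by (rule binomial_le_pow2)
      moreover have "real (2 ^ (2 * r)) \<le> real k"
      proof -
        have "real (2 ^ (2 * r)) = exp (real (2 * r) * ln 2)"
          by (simp only: exp_of_nat_mult) simp
        also have "\<dots> \<le> exp lam"
        proof -
          have "real (2 * r) * ln 2 \<le> real (2 * r) * 1" using ln_2_less_1 by (intro mult_left_mono) auto
          also have "\<dots> \<le> lam" using rlam lampos by simp
          finally show ?thesis by simp
        qed
        also have "\<dots> = real k" unfolding lam_def using kpos by simp
        finally show ?thesis .
      qed
      ultimately show ?thesis by linarith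
    qed
    have k2: "2 \<le> k" using k1 by linarith
    obtain n where n: "2 * r \<le> n" "(n choose r) \<le> k" "k < (Suc n choose r)"
      using choose_n[OF _ k2 c2r] r8 by auto
    have k2n: "k \<le> 2 * (n choose r)" using binom_succ_le[of r n] n by simp
    have n16: "16 \<le> n" using n r8 by simp
    have npos: "0 < real n" using n16 by simp
    have rpos: "0 < real r" using r8 by simp
    have lnn: "real r * (ln (real n) - ln (real r)) \<le> lam"
    proof -
      have "(real n / real r) ^ r \<le> real (n choose r)" by (rule binomial_ge_n_over_k_pow_k) (use n in simp)
      also have "\<dots> \<le> real k" using n by simp
      finally have "(real n / real r) ^ r \<le> real k" .
      hence "ln ((real n / real r) ^ r) \<le> lam" unfolding lam_def using npos rpos kpos by (subst ln_le_cancel_iff) auto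
      thus ?thesis using npos rpos by (simp add: ln_realpow ln_div)
    qed
    have lnnW: "ln (real n) \<le> ln (real r) + lam / real r"
      using lnn rpos by (simp add: field_simps)
    have lnrlam: "ln (real r) \<le> ln lam" using rlam rpos lampos by (subst ln_le_cancel_iff) auto
    have ln2n: "2 \<le> ln (real n)"
    proof -
      have "ln (16::real) \<le> ln (real n)" using n16 by (subst ln_le_cancel_iff) auto
      thus ?thesis using ln16 by simp
    qed
    have lamr: "lam / real r \<le> 2 * lam / \<rho>" using r\<rho> \<rho>9 lampos rpos
      by (simp add: field_simps)
    define L where "L = min (lam / ln lam) (\<mu> / (ln \<mu>)\<^sup>2)"
    have Llo: "sqrt lam / 16 \<le> L"
    proof -
      have "sqrt lam / 16 \<le> lam / ln lam"
      proof -
        have "ln lam \<le> 2 * sqrt lam" by (rule ln_le_2sqrt[OF lampos])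
        hence "lam / (2 * sqrt lam) \<le> lam / ln lam" using lnlam lampos lam1 by (intro divide_left_mono) (auto simp: zero_less_mult_iff)
        moreover have "lam / (2 * sqrt lam) = sqrt lam / 2" using sl lampos
          by (metis divide_divide_eq_left' mult_2_right nonzero_mult_div_cancel_left times_divide_eq_right
            real_sqrt_gt_0_iff less_irrefl)
        ultimately have "sqrt lam / 2 \<le> lam / ln lam" by simp
        moreover have "sqrt lam / 16 \<le> sqrt lam / 2" using lampos by simp
        ultimately show ?thesis by linarith
      qed
      moreover have "sqrt lam / 16 \<le> \<mu> / (ln \<mu>)\<^sup>2"
      proof -
        have "(ln \<mu>)\<^sup>2 \<le> 16 * sqrt \<mu>" by (rule ln_sq_le) (use ln\<mu> \<mu>pos in \<open>smt (verit) ln_le_zero_iff\<close>)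
        hence "\<mu> / (16 * sqrt \<mu>) \<le> \<mu> / (ln \<mu>)\<^sup>2" using ln\<mu> \<mu>pos \<mu>1 by (intro divide_left_mono) (auto simp: zero_less_mult_iff)
        moreover have "\<mu> / (16 * sqrt \<mu>) = sqrt \<mu> / 16" using smu \<mu>pos
          by (metis (no_types, lifting) divide_divide_eq_left' mult.commute nonzero_mult_div_cancel_left
              real_sqrt_gt_0_iff less_irrefl)
        ultimately have "sqrt \<mu> / 16 \<le> \<mu> / (ln \<mu>)\<^sup>2" by simp
        moreover have "sqrt lam / 16 \<le> sqrt \<mu> / 16" using sm by simp
        ultimately show ?thesis by linarith
      qed
      ultimately show ?thesis unfolding L_def by simp
    qed
    have L0: "0 \<le> L"
    proof -
      have "0 \<le> sqrt lam / 16" using lampos by simp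
      thus ?thesis using Llo by linarith
    qed
    have LL: "L = min (ln (real k) / ln (ln (real k))) (ln (real U) / (ln (ln (real U)))\<^sup>2)"
      unfolding L_def lam_def \<mu>_def ..
    have L640: "640 / \<eta> \<le> sqrt L"
    proof -
      have "16 * (640 / \<eta>)\<^sup>2 \<le> sqrt lam" using lams s0a by linarith
      hence "(640 / \<eta>)\<^sup>2 \<le> L" using Llo by simp
      hence "sqrt ((640 / \<eta>)\<^sup>2) \<le> sqrt L" by (rule real_sqrt_le_mono)
      moreover have "sqrt ((640 / \<eta>)\<^sup>2) = 640 / \<eta>" using \<eta> by simp
      ultimately show ?thesis by simp
    qed
    have key1: "\<eta>\<^sup>2 * L / 32 \<le> real r / ln (real n)"
    proof (cases "lam / 8 \<le> \<eta> * \<mu> / ln \<mu>")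
      case True
      hence \<rho>eq: "\<rho> = lam / 8" unfolding \<rho>_def by simp
      have "lam / real r \<le> 16" using lamr \<rho>eq lampos by simp
      hence "ln (real n) \<le> 2 * ln lam" using lnnW lnrlam lnlam by linarith
      moreover have "lam / 16 \<le> real r" using r\<rho> \<rho>eq by simp
      ultimately have "(lam / 16) / (2 * ln lam) \<le> real r / ln (real n)"
        using ln2n lnlam lampos by (intro frac_le) auto
      moreover have "(lam / 16) / (2 * ln lam) = (lam / ln lam) / 32" by simp
      moreover have "\<eta>\<^sup>2 * L / 32 \<le> (lam / ln lam) / 32"
      proof -
        have "\<eta>\<^sup>2 \<le> 1" using \<eta> by (simp add: power_le_one)
        moreover have "0 \<le> L" by (rule L0)
        ultimately have "\<eta>\<^sup>2 * L \<le> L" by (simp add: mult_left_le_one_le)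
        thus ?thesis unfolding L_def by simp
      qed
      ultimately show ?thesis by (metis order_trans)
    next
      case False
      hence \<rho>eq: "\<rho> = \<eta> * \<mu> / ln \<mu>" unfolding \<rho>_def by simp
      have "\<rho> \<le> \<mu>"
      proof -
        have a1: "\<eta> * \<mu> \<le> 1 * \<mu>" using \<eta> \<mu>pos by (intro mult_right_mono) auto
        have a2: "\<mu> * 1 \<le> \<mu> * ln \<mu>" using \<mu>pos ln\<mu> by (intro mult_left_mono) auto
        have "\<eta> * \<mu> \<le> \<mu> * ln \<mu>" using a1 a2 by simp
        thus ?thesis unfolding \<rho>eq using ln\<mu> by (simp add: divide_le_eq)
      qed
      hence lnr: "ln (real r) \<le> ln \<mu>" using r1 rpos by (subst ln_le_cancel_iff) auto
      have "lam / real r \<le> 2 * lam * ln \<mu> / (\<eta> * \<mu>)" using lamr \<rho>eq by (simp add: field_simps)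
      also have "\<dots> \<le> 2 * \<mu> * ln \<mu> / (\<eta> * \<mu>)" using \<mu>ge ln\<mu> \<eta> \<mu>pos \<mu>1
        by (intro divide_right_mono mult_right_mono) auto
      also have "\<dots> = 2 * ln \<mu> / \<eta>" using \<mu>pos by simp
      finally have "lam / real r \<le> 2 * ln \<mu> / \<eta>" .
      hence "ln (real n) \<le> ln \<mu> + 2 * ln \<mu> / \<eta>" using lnnW lnr by linarith
      also have "\<dots> \<le> 3 * ln \<mu> / \<eta>"
      proof -
        have "ln \<mu> \<le> ln \<mu> / \<eta>" using \<eta> ln\<mu> by (simp add: le_divide_eq)
        thus ?thesis by simp
      qed
      finally have lnn3: "ln (real n) \<le> 3 * ln \<mu> / \<eta>" .
      have rr: "\<eta> * \<mu> / (2 * ln \<mu>) \<le> real r" using r\<rho> \<rho>eq by simp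
      have "(\<eta> * \<mu> / (2 * ln \<mu>)) / (3 * ln \<mu> / \<eta>) \<le> real r / ln (real n)"
        using rr lnn3 ln2n ln\<mu> \<eta> \<mu>pos by (intro frac_le) auto
      moreover have "(\<eta> * \<mu> / (2 * ln \<mu>)) / (3 * ln \<mu> / \<eta>) = \<eta>\<^sup>2 * (\<mu> / (ln \<mu>)\<^sup>2) / 6"
        using ln\<mu> \<eta> by (simp add: field_simps power2_eq_square)
      moreover have "\<eta>\<^sup>2 * L / 32 \<le> \<eta>\<^sup>2 * (\<mu> / (ln \<mu>)\<^sup>2) / 6"
      proof -
        define M where "M = \<mu> / (ln \<mu>)\<^sup>2"
        have "L \<le> M" unfolding L_def M_def by simp
        hence "L / 32 \<le> M / 6" using L0 by linarith
        hence "\<eta>\<^sup>2 * (L / 32) \<le> \<eta>\<^sup>2 * (M / 6)" by (intro mult_left_mono) auto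
        thus ?thesis unfolding M_def by simp
      qed
      ultimately show ?thesis by (metis order_trans)
    qed
    have lnnlam: "ln (real n) \<le> lam"
    proof -
      have "lam / real r \<le> 16 + 4 * sqrt lam / \<eta>"
      proof (cases "lam / 8 \<le> \<eta> * sqrt lam / 2")
        case True
        hence "lam / 8 \<le> \<rho>" using \<rho>lo by simp
        hence "2 * lam / \<rho> \<le> 16" using lampos \<rho>9 by (simp add: field_simps)
        thus ?thesis using lamr lampos \<eta> by (smt (verit) divide_nonneg_pos real_sqrt_ge_zero)
      next
        case False
        hence "\<eta> * sqrt lam / 2 \<le> \<rho>" using \<rho>lo by simp
        hence "2 * lam / \<rho> \<le> 2 * lam / (\<eta> * sqrt lam / 2)" using lampos \<eta> \<eta>s
          by (intro divide_left_mono) auto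
        also have "\<dots> = 4 * sqrt lam / \<eta>" using sl lampos \<eta>
          by (simp add: field_simps)
        finally show ?thesis using lamr by simp
      qed
      moreover have "ln lam \<le> 2 * sqrt lam" by (rule ln_le_2sqrt[OF lampos])
      ultimately have "ln (real n) \<le> 2 * sqrt lam + 16 + 4 * sqrt lam / \<eta>" using lnnW lnrlam by linarith
      also have "\<dots> \<le> lam"
      proof -
        have a: "2 + 4 / \<eta> + 16 \<le> sqrt lam" using lams s0b by linarith
        have q0: "0 \<le> sqrt lam" using lampos by simp
        have "sqrt lam * (2 + 4 / \<eta> + 16) \<le> sqrt lam * sqrt lam" using a q0 by (rule mult_left_mono)
        moreover have "sqrt lam * (2 + 4 / \<eta> + 16) = 2 * sqrt lam + 4 * sqrt lam / \<eta> + 16 * sqrt lam"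
          by (simp add: algebra_simps)
        moreover have "16 \<le> 16 * sqrt lam" using lams s0pos by linarith
        ultimately show ?thesis using sl by linarith
      qed
      finally show ?thesis .
    qed
    define T where "T = 16 * n * nat \<lceil>ln (real n)\<rceil>"
    have Tp: "n \<le> card {q. prime q \<and> q \<le> T}" "real T \<le> 32 * real n * ln (real n)" "0 < T"
      using chebT[OF n16] unfolding T_def by auto
    have key2: "real r * ln (real T) < \<mu>"
    proof -
      have "ln (real T) \<le> ln (32 * real n * ln (real n))" using Tp by (subst ln_le_cancel_iff) auto
      also have "\<dots> = ln 32 + ln (real n) + ln (ln (real n))" using npos ln2n n16 by (simp add: ln_mult)
      finally have lT: "ln (real T) \<le> 5 + ln (real n) + ln (ln (real n))" using ln32 by linarith
      have lln: "ln (ln (real n)) \<le> ln \<mu>" using lnnlam \<mu>ge ln2n by (smt (verit) ln_le_cancel_iff)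
      have lrm: "ln (real r) \<le> ln \<mu>" using lnrlam \<mu>ge lampos by (smt (verit) ln_le_cancel_iff)
      have "real r * ln (real T) \<le> real r * (5 + ln (real n) + ln (ln (real n)))"
        using lT rpos by (intro mult_left_mono) auto
      also have "\<dots> = 5 * real r + real r * ln (real n) + real r * ln (ln (real n))" by (simp add: algebra_simps)
      also have "\<dots> \<le> 3 * real r * ln \<mu> + lam"
      proof -
        have "real r * ln (real n) \<le> real r * ln (real r) + lam" using lnn by (simp add: algebra_simps)
        moreover have "real r * ln (real r) \<le> real r * ln \<mu>" using lrm rpos by (simp add: mult_left_mono)
        moreover have "real r * ln (ln (real n)) \<le> real r * ln \<mu>" using lln rpos by (simp add: mult_left_mono)
        moreover have "real r * 5 \<le> real r * ln \<mu>" using ln\<mu> rpos by (simp add: mult_left_mono)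
        ultimately show ?thesis by linarith
      qed
      also have "\<dots> \<le> 3 * \<eta> * \<mu> + lam"
      proof -
        have "real r * ln \<mu> \<le> \<eta> * \<mu>" using r\<mu> ln\<mu> by (simp add: le_divide_eq)
        thus ?thesis by linarith
      qed
      also have "\<dots> < \<mu>"
      proof -
        have "lam \<le> \<mu> / (1 + e)" using \<mu>lam e by (simp add: le_divide_eq mult.commute)
        moreover have "3 * \<eta> * \<mu> + \<mu> / (1 + e) < \<mu>"
        proof -
          have "3 * \<eta> * (1 + e) + 1 < 1 + e" unfolding \<eta>_def using e by (simp add: field_simps)
          hence "(3 * \<eta> * (1 + e) + 1) * \<mu> < (1 + e) * \<mu>" using \<mu>pos by simp
          thus ?thesis using e by (simp add: field_simps)
        qed
        ultimately show ?thesis by linarith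
      qed
      finally show ?thesis .
    qed
    have TrU: "T ^ r < U"
    proof -
      have "real (T ^ r) = exp (real r * ln (real T))" by (simp only: exp_of_nat_mult) (use Tp in simp)
      also have "\<dots> < exp \<mu>" using key2 by simp
      also have "\<dots> = real U" unfolding \<mu>_def using Upos by simp
      finally show ?thesis by linarith
    qed
    define x where "x = real r / (128 * ln (real n))"
    have xpos: "0 < x" unfolding x_def using rpos ln2n by simp
    define j where "j = nat \<lfloor>sqrt x\<rfloor>"
    have sx: "0 \<le> sqrt x" using xpos by simp
    have j1: "real j \<le> sqrt x" "sqrt x - 1 < real j" unfolding j_def using sx by linarith+
    have jsq: "(real j)\<^sup>2 \<le> x" using j1 xpos
      by (metis of_nat_0_le_iff power2_le_imp_le power_mono real_sqrt_pow2 less_imp_le)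
    have jr: "j \<le> r"
    proof -
      have "x \<le> real r" unfolding x_def using rpos ln2n by (simp add: field_simps)
      hence "sqrt x \<le> sqrt (real r)" by simp
      also have "sqrt (real r) \<le> real r"
      proof -
        have "real r * 1 \<le> real r * real r" using r8 by (intro mult_left_mono) auto
        hence "sqrt (real r) \<le> sqrt (real r * real r)" by (simp only: mult_1_right real_sqrt_le_mono)
        also have "sqrt (real r * real r) = real r" by simp
        finally show ?thesis .
      qed
      finally show ?thesis using j1 by linarith
    qed
    have jT: "2 * j ^ 2 * T \<le> r * (n - r)"
    proof -
      have "real (2 * j ^ 2 * T) = 2 * (real j)\<^sup>2 * real T" by simp
      also have "\<dots> \<le> 2 * x * (32 * real n * ln (real n))" using jsq Tp xpos
        by (intro mult_mono) auto
      also have "\<dots> = real r * real n / 2" unfolding x_def using ln2n by (simp add: field_simps)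
      also have "\<dots> \<le> real r * real (n - r)" using n rpos by (simp add: of_nat_diff)
      finally have "real (2 * j ^ 2 * T) \<le> real (r * (n - r))" by simp
      thus ?thesis by (simp only: of_nat_le_iff)
    qed
    have key3: "16 * exp (c * sqrt L) \<le> 2 ^ j"
    proof -
      have "\<eta>\<^sup>2 * L / 4096 \<le> x" unfolding x_def using key1 ln2n by (simp add: field_simps)
      hence "sqrt (\<eta>\<^sup>2 * L / 4096) \<le> sqrt x" by simp
      moreover have "sqrt (\<eta>\<^sup>2 * L / 4096) = \<eta> * sqrt L / 64" using \<eta>
        by (simp add: real_sqrt_mult real_sqrt_divide)
      ultimately have jl: "\<eta> * sqrt L / 64 - 1 \<le> real j" using j1 by linarith
      have "4 * ln 2 + c * sqrt L \<le> real j * ln 2"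
      proof -
        have "5 \<le> \<eta> * sqrt L / 128" using L640 \<eta> by (simp add: field_simps)
        hence "4 + \<eta> * sqrt L / 128 \<le> real j" using jl by linarith
        hence "(4 + \<eta> * sqrt L / 128) * ln 2 \<le> real j * ln 2" by (intro mult_right_mono) auto
        thus ?thesis unfolding c_def by (simp add: field_simps)
      qed
      hence "exp (4 * ln 2 + c * sqrt L) \<le> exp (real j * ln 2)" by simp
      moreover have "exp (4 * ln 2 + c * sqrt L) = 16 * exp (c * sqrt L)"
      proof -
        have "exp (real 4 * ln 2) = exp (ln 2) ^ 4" by (rule exp_of_nat_mult)
        hence "exp (4 * ln 2) = (16::real)" by simp
        thus ?thesis by (simp add: exp_add)
      qed
      moreover have "exp (real j * ln 2) = 2 ^ j" by (simp only: exp_of_nat_mult) simp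
      ultimately show ?thesis by simp
    qed
    show "1 \<le> k \<and> k < U \<and> (\<exists>r n T j. 2 * r \<le> n \<and> n \<le> card {q. prime q \<and> q \<le> T} \<and> T ^ r < U \<and>
        (n choose r) \<le> k \<and> k \<le> 2 * (n choose r) \<and> j \<le> r \<and> 2 * j ^ 2 * T \<le> r * (n - r) \<and>
        16 * exp (c * sqrt (min (ln (real k) / ln (ln (real k)))
                                   (ln (real U) / (ln (ln (real U)))\<^sup>2))) \<le> 2 ^ j)"
      using k2 kltU n k2n Tp TrU jr jT key3 unfolding LL by auto
  qed
qed



lemma construct:
  fixes p m U k r n T j :: nat
  assumes p: "prime p" and pU: "U < p" and m: "0 < m" "m \<le> U" and k1: "1 \<le> k" and kU: "k < U"
    and rn: "2 * r \<le> n" and nT: "n \<le> card {q. prime q \<and> q \<le> T}" and TU: "T ^ r < U"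
    and ck: "(n choose r) \<le> k" "k \<le> 2 * (n choose r)" and jr: "j \<le> r"
    and jT: "2 * j ^ 2 * T \<le> r * (n - r)"
  shows "\<exists>X x a b. X \<subseteq> {..<U} \<and> card X = k \<and> x < U \<and> x \<notin> X \<and> a < m \<and> b < m \<and>
           2 ^ j / (16 * real m * real k) \<le> cond_prob p m X x a b"
proof -
  obtain P where P: "P \<subseteq> {q. prime q \<and> q \<le> T}" "card P = n" "finite P"
    using obtain_subset_with_card_n[OF nT] by metis
  have prP: "\<forall>q\<in>P. prime q \<and> q \<le> T" using P by auto
  have rn': "r \<le> n" using rn by simp
  define F where "F = {S. S \<subseteq> P \<and> card S = r}"
  define D where "D = prodS ` F"
  have cD: "card D = n choose r" unfolding D_def F_def by (rule family_bound(1)[OF P(3) prP P(2) rn'])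
  have sD: "real (card D) * (real (r choose j) * real ((n - r) choose j) / real T ^ j)
           \<le> (\<Sum>y\<in>D. \<Sum>z\<in>D. real (gcd y z) / real (max y z))"
    unfolding D_def F_def by (rule family_bound(2)[OF P(3) prP P(2) rn'])
  have Dsub: "D \<subseteq> {1..<U}"
  proof
    fix y assume "y \<in> D"
    then obtain S where S: "S \<subseteq> P" "card S = r" "y = prodS S" unfolding D_def F_def by auto
    have finS: "finite S" using S P(3) finite_subset by blast
    have "\<forall>q\<in>S. prime q" using S prP by auto
    hence "0 < y" using S prodS_pos by simp
    moreover have "y \<le> T ^ r" using S prodS_le[of S T] prP finS by auto
    ultimately show "y \<in> {1..<U}" using TU by auto
  qed
  have finD: "finite D" using Dsub finite_subset by blast
  have "k - card D \<le> card ({1..<U} - D)"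
    using Dsub kU by (simp add: card_Diff_subset finD)
  then obtain E where E: "E \<subseteq> {1..<U} - D" "card E = k - card D" "finite E"
    using obtain_subset_with_card_n by metis
  define X where "X = D \<union> E"
  have cX: "card X = k" unfolding X_def using E finD cD ck
    by (subst card_Un_disjoint) auto
  have Xsub: "X \<subseteq> {1..<U}" unfolding X_def using Dsub E by auto
  have finX: "finite X" unfolding X_def using finD E by simp
  have Xne: "X \<noteq> {}" using cX k1 by auto
  have Xp: "\<forall>y\<in>X. 0 < y \<and> y < p" using Xsub pU by auto
  have mp: "m \<le> p" using m pU by simp
  have hb: "(\<Sum>y\<in>X. \<Sum>z\<in>X. real (gcd y z) / real (max y z)) / (8 * real m * real (card X) ^ 2)
           \<le> cond_prob p m X 0 0 0"
    by (rule hash_bound[OF p m(1) mp finX Xne Xp])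
  have DX: "D \<subseteq> X" unfolding X_def by simp
  have SDX: "(\<Sum>y\<in>D. \<Sum>z\<in>D. real (gcd y z) / real (max y z)) \<le> (\<Sum>y\<in>X. \<Sum>z\<in>X. real (gcd y z) / real (max y z))"
  proof -
    have "(\<Sum>y\<in>D. \<Sum>z\<in>D. real (gcd y z) / real (max y z)) \<le> (\<Sum>y\<in>D. \<Sum>z\<in>X. real (gcd y z) / real (max y z))"
      by (rule sum_mono, rule sum_mono2) (use finX DX in auto)
    also have "\<dots> \<le> (\<Sum>y\<in>X. \<Sum>z\<in>X. real (gcd y z) / real (max y z))"
      by (rule sum_mono2) (use finX DX in \<open>auto intro: sum_nonneg\<close>)
    finally show ?thesis .
  qed
  have Tpos: "0 < T" if jpos: "0 < j"
  proof -
    have "0 < n" using jpos jr rn by simp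
    hence "P \<noteq> {}" using P by auto
    then obtain q where "q \<in> P" by auto
    thus ?thesis using prP prime_gt_0_nat by (metis le_0_eq neq0_conv)
  qed
  have binb: "2 ^ j \<le> real (r choose j) * real ((n - r) choose j) / real T ^ j"
  proof -
    have jn: "j \<le> n - r" using jr rn by simp
    have b1: "(real r / real j) ^ j \<le> real (r choose j)" by (rule binomial_ge_n_over_k_pow_k) (use jr in simp)
    have b2: "(real (n - r) / real j) ^ j \<le> real ((n - r) choose j)" by (rule binomial_ge_n_over_k_pow_k) (use jn in simp)
    have "(2 * real T) ^ j \<le> (real r / real j * (real (n - r) / real j)) ^ j"
    proof (cases "j = 0")
      case False
      have "real (2 * j ^ 2 * T) \<le> real (r * (n - r))" using jT by (simp only: of_nat_le_iff)
      moreover have "real (2 * j ^ 2 * T) = 2 * real T * (real j * real j)" by (simp add: power2_eq_square)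
      moreover have "real (r * (n - r)) = real r * real (n - r)" by (simp only: of_nat_mult)
      ultimately have "2 * real T * (real j * real j) \<le> real r * real (n - r)" by linarith
      hence "2 * real T \<le> real r / real j * (real (n - r) / real j)" using False
        by (simp add: field_simps)
      thus ?thesis by (intro power_mono) auto
    qed simp
    also have "\<dots> = (real r / real j) ^ j * (real (n - r) / real j) ^ j" by (rule power_mult_distrib)
    also have "\<dots> \<le> real (r choose j) * real ((n - r) choose j)"
      by (rule mult_mono[OF b1 b2]) auto
    finally have "(2 * real T) ^ j \<le> real (r choose j) * real ((n - r) choose j)" .
    moreover have "(2 * real T) ^ j = 2 ^ j * real T ^ j" by (simp add: power_mult_distrib)
    ultimately show ?thesis using Tpos by (cases "j = 0") (simp_all add: field_simps)
  qed
  have kD: "real k / 2 \<le> real (card D)" using ck cD by simp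
  have "2 ^ j / (16 * real m * real k) = ((real k / 2) * 2 ^ j) / (8 * real m * real k ^ 2)"
    using k1 m by (simp add: field_simps power2_eq_square)
  also have "\<dots> \<le> (real (card D) * (real (r choose j) * real ((n - r) choose j) / real T ^ j)) / (8 * real m * real k ^ 2)"
    by (rule divide_right_mono, rule mult_mono[OF kD binb]) auto
  also have "\<dots> \<le> (\<Sum>y\<in>X. \<Sum>z\<in>X. real (gcd y z) / real (max y z)) / (8 * real m * real k ^ 2)"
    by (rule divide_right_mono) (use sD SDX in auto)
  also have "\<dots> \<le> cond_prob p m X 0 0 0" using hb cX by simp
  finally have main: "2 ^ j / (16 * real m * real k) \<le> cond_prob p m X 0 0 0" .
  show ?thesis
    by (rule exI[of _ X], rule exI[of _ 0], rule exI[of _ 0], rule exI[of _ 0])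
       (use Xsub cX kU k1 m main in auto)
qed

theorem theorem11p7:
  fixes \<epsilon> :: real
  assumes "\<epsilon> > 0"
  shows "\<exists>c > 0. \<exists>K0 :: nat. \<forall>(k :: nat) (U :: nat) (p :: nat) (m :: nat).
           k \<ge> K0 \<and> real U \<ge> real k powr (1 + \<epsilon>) \<and> prime p \<and> p > U \<and> 0 < m \<and> m \<le> U \<longrightarrow>
           (\<exists>X x a b. X \<subseteq> {..<U} \<and> card X = k \<and> x < U \<and> x \<notin> X \<and> a < m \<and> b < m \<and>
              cond_prob p m X x a b \<ge>
                1 / (real m * real k) *
                exp (c * sqrt (min (ln (real k) / ln (ln (real k)))
                                   (ln (real U) / (ln (ln (real U)))\<^sup>2))))"
proof -
  obtain c K0 where c: "c > 0" and K: "\<And>k U. k \<ge> K0 \<and> real U \<ge> real k powr (1 + \<epsilon>) \<Longrightarrow>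
     1 \<le> k \<and> k < U \<and> (\<exists>r n T j. 2 * r \<le> n \<and> n \<le> card {q. prime q \<and> q \<le> T} \<and> T ^ r < U \<and>
        (n choose r) \<le> k \<and> k \<le> 2 * (n choose r) \<and> j \<le> r \<and> 2 * j ^ 2 * T \<le> r * (n - r) \<and>
        16 * exp (c * sqrt (min (ln (real k) / ln (ln (real k)))
                                   (ln (real U) / (ln (ln (real U)))\<^sup>2))) \<le> 2 ^ j)"
    using params[OF assms] by blast
  show ?thesis
  proof (rule exI[of _ c], rule conjI[OF c], rule exI[of _ K0], intro allI impI)
    fix k U p m :: nat
    assume H: "k \<ge> K0 \<and> real U \<ge> real k powr (1 + \<epsilon>) \<and> prime p \<and> p > U \<and> 0 < m \<and> m \<le> U"
    define Q where "Q = exp (c * sqrt (min (ln (real k) / ln (ln (real k)))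
                                   (ln (real U) / (ln (ln (real U)))\<^sup>2)))"
    from K[of k U] H obtain r n T j where k1: "1 \<le> k" and kU: "k < U" and
      R: "2 * r \<le> n" "n \<le> card {q. prime q \<and> q \<le> T}" "T ^ r < U"
        "(n choose r) \<le> k" "k \<le> 2 * (n choose r)" "j \<le> r" "2 * j ^ 2 * T \<le> r * (n - r)"
        and Q: "16 * Q \<le> 2 ^ j" unfolding Q_def by blast
    obtain X x a b where X: "X \<subseteq> {..<U}" "card X = k" "x < U" "x \<notin> X" "a < m" "b < m"
        and cp: "2 ^ j / (16 * real m * real k) \<le> cond_prob p m X x a b"
      using construct[of p U m k r n T j] H k1 kU R by blast
    have "1 / (real m * real k) * Q = 16 * Q / (16 * real m * real k)" by simp
    also have "\<dots> \<le> 2 ^ j / (16 * real m * real k)" using Q H k1 by (intro divide_right_mono) auto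
    finally have "1 / (real m * real k) * Q \<le> cond_prob p m X x a b" using cp by linarith
    thus "\<exists>X x a b. X \<subseteq> {..<U} \<and> card X = k \<and> x < U \<and> x \<notin> X \<and> a < m \<and> b < m \<and>
              cond_prob p m X x a b \<ge>
                1 / (real m * real k) *
                exp (c * sqrt (min (ln (real k) / ln (ln (real k)))
                                   (ln (real U) / (ln (ln (real U)))\<^sup>2)))"
      using X unfolding Q_def by blast
  qed
qed


end
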